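(* Let $d\ge2$ and let $\eta$ be a distribution on the nonnegative integers with finite mean, and consider the frog model on $\mathbb{T}_d$ with sleeping-frog distribution $\eta$. For $n\ge0$ let $F_n$ be the set of frogs awake at time $n$, and for a frog $f$ let $|f|$ be its distance from the root at time $n$. Set $\theta=\tfrac12\log\big((\mathbf{E}\eta+1)d\big)$, $m=\frac{2\sqrt{(\mathbf{E}\eta+1)d}}{d+1}$ and \[ W_n=\sum_{f\in F_n}e^{-\theta|f|}. \] Then for every $n\ge0$, $\mathbf{E}[W_{n+1}\mid\mathcal{F}_n]\le mW_n$, where $\mathcal{F}_n$ is the $\sigma$-field generated by the process up to time $n$. Consequently $W_n/m^n$ is a nonnegative supermartingale.
   Context: Let $d\ge 2$ and let $\mathbb{T}_d$ be the infinite rooted $d$-ary tree: every vertex has exactly $d$ children, so the root $\varnothing$ has degree $d$ and every other vertex has degree $d+1$. The frog model on $\mathbb{T}_d$ with sleeping-frog distribution $\eta$ (a law on the nonnegative integers) is defined as follows. Initially there is one awake frog at the root, and at each non-root vertex there is an independent $\eta$-distributed number of sleeping frogs. Time is discrete; at each step every awake frog takes one step of its own independent simple random walk (moves to a uniformly random neighbor). When a vertex holding sleeping frogs is visited for the first time by an awake frog, all frogs sleeping there wake up and from then on perform their own independent simple random walks (frogs woken at time $n+1$ belong to $F_{n+1}$). *)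

theory Defs
  imports "HOL-Probability.Probability"
begin

text \<open>Vertices of the infinite rooted d-ary tree: finite lists of child indices
  (each < d), the most recent step first.  The root is [], the children of v are
  i # v (i < d), the parent of a non-root v is tl v, and the distance of v from
  the root is length v.\<close>

definition tree_nbrs :: "nat \<Rightarrow> nat list \<Rightarrow> nat list set" where
  "tree_nbrs d v = (if v = [] then {} else {tl v}) \<union> (\<lambda>i. i # v) ` {..<d}"

fun frog_moves :: "nat \<Rightarrow> nat list list \<Rightarrow> nat list list pmf" where
  "frog_moves d [] = return_pmf []"
| "frog_moves d (v # vs) =
     bind_pmf (pmf_of_set (tree_nbrs d v)) (\<lambda>w.
     bind_pmf (frog_moves d vs) (\<lambda>ws. return_pmf (w # ws)))"

text \<open>Waking the sleeping frogs at newly visited vertices: each such vertex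
  carries an independent eta-distributed number of frogs (sampled lazily, when
  first visited).\<close>
fun frog_wake :: "nat pmf \<Rightarrow> nat list list \<Rightarrow> nat list list pmf" where
  "frog_wake \<eta> [] = return_pmf []"
| "frog_wake \<eta> (v # vs) =
     bind_pmf \<eta> (\<lambda>k. bind_pmf (frog_wake \<eta> vs) (\<lambda>r. return_pmf (replicate k v @ r)))"

text \<open>State: (positions of the awake frogs, set of visited vertices).\<close>
type_synonym frog_state = "nat list list \<times> nat list set"

definition frog_init :: frog_state where
  "frog_init = ([[]], {[]})"

definition frog_step :: "nat \<Rightarrow> nat pmf \<Rightarrow> frog_state \<Rightarrow> frog_state pmf" where
  "frog_step d \<eta> s =
     bind_pmf (frog_moves d (fst s)) (\<lambda>fs'.
     bind_pmf (frog_wake \<eta> (remdups (filter (\<lambda>w. w \<notin> snd s) fs'))) (\<lambda>ws.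
     return_pmf (fs' @ ws, snd s \<union> set fs')))"

text \<open>Law of the history (state at times 0..n) of the frog model.\<close>
primrec frog_hist :: "nat \<Rightarrow> nat pmf \<Rightarrow> nat \<Rightarrow> frog_state list pmf" where
  "frog_hist d \<eta> 0 = return_pmf [frog_init]"
| "frog_hist d \<eta> (Suc n) =
     bind_pmf (frog_hist d \<eta> n) (\<lambda>h. map_pmf (\<lambda>s. h @ [s]) (frog_step d \<eta> (last h)))"

definition mean_eta :: "nat pmf \<Rightarrow> real" where
  "mean_eta \<eta> = measure_pmf.expectation \<eta> real"

definition frog_theta :: "nat \<Rightarrow> nat pmf \<Rightarrow> real" where
  "frog_theta d \<eta> = ln ((mean_eta \<eta> + 1) * real d) / 2"

definition frog_m :: "nat \<Rightarrow> nat pmf \<Rightarrow> real" where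
  "frog_m d \<eta> = 2 * sqrt ((mean_eta \<eta> + 1) * real d) / (real d + 1)"

definition frog_W :: "nat \<Rightarrow> nat pmf \<Rightarrow> frog_state \<Rightarrow> real" where
  "frog_W d \<eta> s = sum_list (map (\<lambda>v. exp (- frog_theta d \<eta> * real (length v))) (fst s))"

end

theory Submission
  imports Defs
begin


lemma cond_hist:
  fixes q :: "'a list pmf"
  assumes len: "\<And>h0. h0 \<in> set_pmf q \<Longrightarrow> length h0 = L" and hq: "h \<in> set_pmf q"
  shows "cond_pmf (bind_pmf q (\<lambda>h0. map_pmf (\<lambda>s. h0 @ [s]) (K h0))) {h'. take L h' = h}
         = map_pmf (\<lambda>s. h @ [s]) (K h)"
proof -
  define p where "p = bind_pmf q (\<lambda>h0. map_pmf (\<lambda>s. h0 @ [s]) (K h0))"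
  define A where "A = {h'. take L h' = h}"
  define M where "M = (\<lambda>h0. map_pmf (\<lambda>s. h0 @ [s]) (K h0))"
  have pre: "(\<lambda>s. h0 @ [s]) -` A = (if h0 = h then UNIV else {})" if "h0 \<in> set_pmf q" for h0
    using len[OF that] by (auto simp: A_def)
  have em: "emeasure (measure_pmf p) A = pmf q h"
  proof -
    have "emeasure (measure_pmf p) A = (\<integral>\<^sup>+h0. emeasure (M h0) A \<partial>q)"
      by (simp add: p_def M_def)
    also have "\<dots> = (\<integral>\<^sup>+h0. indicator {h} h0 \<partial>q)"
      apply (rule nn_integral_cong_AE)
      apply (rule AE_pmfI)
      by (simp add: M_def emeasure_distr pre measure_pmf.emeasure_space_1 map_pmf_rep_eq)
    also have "\<dots> = pmf q h" by (simp add: emeasure_pmf_single)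
    finally show ?thesis .
  qed
  hence meas: "measure p A = pmf q h"
    by (simp add: measure_pmf.emeasure_eq_measure)
  have pos: "pmf q h > 0" using hq by (simp add: pmf_positive)
  have ne: "set_pmf p \<inter> A \<noteq> {}"
    using meas pos measure_pmf_zero_iff[of p A] by auto
  have setM: "set_pmf (M h) \<subseteq> A" by (auto simp: M_def A_def len[OF hq])
  have px: "pmf p x = pmf q h * pmf (M h) x" if "x \<in> A" for x
  proof -
    have z: "pmf (M h0) x = (if h0 = h then pmf (M h) x else 0)" if "h0 \<in> set_pmf q" for h0
    proof (cases "h0 = h")
      case False
      have "x \<notin> set_pmf (M h0)" using len[OF that] \<open>x \<in> A\<close> False by (auto simp: M_def A_def)
      then show ?thesis using False by (simp add: set_pmf_eq)
    qed simp
    have "ennreal (pmf p x) = (\<integral>\<^sup>+h0. pmf (M h0) x \<partial>q)"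
      by (simp add: p_def M_def ennreal_pmf_bind)
    also have "\<dots> = (\<integral>\<^sup>+h0. ennreal (pmf (M h) x) * indicator {h} h0 \<partial>q)"
      apply (rule nn_integral_cong_AE)
      apply (rule AE_pmfI)
      by (simp add: z split: split_indicator)
    also have "\<dots> = ennreal (pmf (M h) x) * pmf q h"
      by (simp add: nn_integral_cmult_indicator emeasure_pmf_single)
    finally show ?thesis by (simp add: ennreal_mult[symmetric] mult.commute)
  qed
  have "cond_pmf p A = M h"
  proof (rule pmf_eqI)
    fix x
    show "pmf (cond_pmf p A) x = pmf (M h) x"
    proof (cases "x \<in> A")
      case True
      then show ?thesis using pmf_cond[OF ne] px meas pos by simp
    next
      case False
      then have "x \<notin> set_pmf (M h)" using setM by auto
      then show ?thesis using pmf_cond[OF ne] False by (simp add: set_pmf_eq)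
    qed
  qed
  then show ?thesis by (simp add: p_def A_def M_def)
qed



definition finv :: "frog_state \<Rightarrow> bool" where
  "finv s = ((\<forall>v\<in>snd s. v \<noteq> [] \<longrightarrow> tl v \<in> snd s) \<and> set (fst s) \<subseteq> snd s)"

lemma nbrs_fin: "finite (tree_nbrs d v)" by (simp add: tree_nbrs_def)
lemma nbrs_ne: "d \<ge> 1 \<Longrightarrow> tree_nbrs d v \<noteq> {}" by (auto simp: tree_nbrs_def lessThan_empty_iff)

lemma set_moves: "d \<ge> 1 \<Longrightarrow> ws \<in> set_pmf (frog_moves d fs) \<Longrightarrow> list_all2 (\<lambda>v w. w \<in> tree_nbrs d v) fs ws"
  by (induction fs arbitrary: ws) (auto simp: nbrs_fin nbrs_ne)

lemma set_wake: "ws \<in> set_pmf (frog_wake \<eta> L) \<Longrightarrow> set ws \<subseteq> set L"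
  by (induction L arbitrary: ws) fastforce+

lemma finv_step:
  assumes d: "d \<ge> 1" and inv: "finv s" and s': "s' \<in> set_pmf (frog_step d \<eta> s)"
  shows "finv s'"
proof -
  obtain fs S where s: "s = (fs, S)" by (cases s)
  from s' obtain fs' ws where fs': "fs' \<in> set_pmf (frog_moves d fs)"
    and ws: "ws \<in> set_pmf (frog_wake \<eta> (remdups (filter (\<lambda>w. w \<notin> S) fs')))"
    and s'eq: "s' = (fs' @ ws, S \<union> set fs')"
    by (auto simp: frog_step_def s)
  have la: "list_all2 (\<lambda>v w. w \<in> tree_nbrs d v) fs fs'" using set_moves[OF d fs'] .
  have nb: "\<exists>v\<in>S. w \<in> tree_nbrs d v" if "w \<in> set fs'" for w
  proof -
    from that obtain i where "i < length fs'" "fs' ! i = w" by (auto simp: in_set_conv_nth)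
    moreover have "length fs = length fs'" using la list_all2_lengthD by blast
    ultimately show ?thesis using la inv s
      by (metis finv_def fst_conv list_all2_conv_all_nth nth_mem snd_conv subsetD)
  qed
  have "tl w \<in> S \<union> set fs'" if wA: "w \<in> set fs'" and wB: "w \<noteq> []" for w
  proof -
    obtain v where v: "v \<in> S" "w \<in> tree_nbrs d v" using nb[OF wA] by blast
    show ?thesis
    proof (cases "w = tl v \<and> v \<noteq> []")
      case True
      then have "w \<in> S" using inv v by (auto simp: finv_def s)
      then show ?thesis using inv wB by (auto simp: finv_def s)
    next
      case False
      then show ?thesis using v by (auto simp: tree_nbrs_def split: if_splits)
    qed
  qed
  then show ?thesis using inv set_wake[OF ws] by (auto simp: finv_def s s'eq)
qed

lemma hist_props:
  assumes "d \<ge> 1"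
  shows "h \<in> set_pmf (frog_hist d \<eta> n) \<Longrightarrow> length h = Suc n \<and> finv (last h)"
proof (induction n arbitrary: h)
  case 0
  then show ?case by (auto simp: frog_init_def finv_def)
next
  case (Suc n)
  then obtain h0 s where "h0 \<in> set_pmf (frog_hist d \<eta> n)" "s \<in> set_pmf (frog_step d \<eta> (last h0))"
    "h = h0 @ [s]" by auto
  then show ?case using Suc.IH finv_step[OF assms, of "last h0" s \<eta>] by auto
qed



lemma sum_list_nonneg_map: "(\<And>x. (g::'a \<Rightarrow> real) x \<ge> 0) \<Longrightarrow> sum_list (map g xs) \<ge> 0"
  by (induction xs) (auto intro: add_nonneg_nonneg)

lemma remdups_le: "(\<And>x. (g::'a \<Rightarrow> real) x \<ge> 0) \<Longrightarrow> sum_list (map g (remdups xs)) \<le> sum_list (map g xs)"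
  by (induction xs) (auto simp: add_increasing)

lemma mean_nn: "integrable (measure_pmf \<eta>) real \<Longrightarrow> (\<integral>\<^sup>+k. ennreal (real k) \<partial>\<eta>) = ennreal (mean_eta \<eta>)"
  unfolding mean_eta_def by (rule nn_integral_eq_integral) auto

lemma mean_ge0: "mean_eta \<eta> \<ge> 0"
  unfolding mean_eta_def by simp

lemma wake_int:
  assumes int: "integrable (measure_pmf \<eta>) real" and g: "\<And>v. g v \<ge> 0"
  shows "(\<integral>\<^sup>+ws. ennreal (sum_list (map g ws)) \<partial>frog_wake \<eta> L) = ennreal (mean_eta \<eta> * sum_list (map g L))"
proof (induction L)
  case Nil
  then show ?case by simp
next
  case (Cons v vs)
  have "(\<integral>\<^sup>+ws. ennreal (sum_list (map g ws)) \<partial>frog_wake \<eta> (v # vs))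
     = (\<integral>\<^sup>+k. \<integral>\<^sup>+r. ennreal (real k * g v) + ennreal (sum_list (map g r)) \<partial>frog_wake \<eta> vs \<partial>\<eta>)"
    by (simp add: sum_list_replicate g sum_list_nonneg_map ennreal_plus[symmetric] del: ennreal_plus)
  also have "\<dots> = (\<integral>\<^sup>+k. ennreal (real k * g v) + ennreal (mean_eta \<eta> * sum_list (map g vs)) \<partial>\<eta>)"
    by (simp add: nn_integral_add Cons measure_pmf.emeasure_space_1)
  also have "\<dots> = ennreal (g v) * (\<integral>\<^sup>+k. ennreal (real k) \<partial>\<eta>) + ennreal (mean_eta \<eta> * sum_list (map g vs))"
    by (simp add: nn_integral_add measure_pmf.emeasure_space_1 nn_integral_multc g ennreal_mult' mult.commute)
  also have "\<dots> = ennreal (mean_eta \<eta> * sum_list (map g (v # vs)))"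
    by (simp add: mean_nn[OF int] ennreal_mult'[symmetric] g mean_ge0 ennreal_plus[symmetric] sum_list_nonneg_map
        algebra_simps del: ennreal_plus)
  finally show ?case .
qed

lemma moves_bound:
  assumes d: "d \<ge> 1" and c: "c \<ge> 0" and f: "\<And>w. (f::nat list \<Rightarrow> real) w \<ge> 0" and g: "\<And>v. g v \<ge> 0"
    and b: "\<And>v. v \<in> set fs \<Longrightarrow> (\<integral>\<^sup>+w. ennreal (f w) \<partial>pmf_of_set (tree_nbrs d v)) \<le> ennreal (c * g v)"
  shows "(\<integral>\<^sup>+ws. ennreal (sum_list (map f ws)) \<partial>frog_moves d fs) \<le> ennreal (c * sum_list (map g fs))"
  using b
proof (induction fs)
  case Nil
  then show ?case by simp
next
  case (Cons v vs)
  have "(\<integral>\<^sup>+ws. ennreal (sum_list (map f ws)) \<partial>frog_moves d (v # vs))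
     = (\<integral>\<^sup>+w. \<integral>\<^sup>+ws. ennreal (f w) + ennreal (sum_list (map f ws)) \<partial>frog_moves d vs \<partial>pmf_of_set (tree_nbrs d v))"
    by (simp add: f sum_list_nonneg_map ennreal_plus[symmetric] del: ennreal_plus)
  also have "\<dots> = (\<integral>\<^sup>+w. ennreal (f w) \<partial>pmf_of_set (tree_nbrs d v)) + (\<integral>\<^sup>+ws. ennreal (sum_list (map f ws)) \<partial>frog_moves d vs)"
    by (simp add: nn_integral_add measure_pmf.emeasure_space_1)
  also have "\<dots> \<le> ennreal (c * g v) + ennreal (c * sum_list (map g vs))"
    using Cons by (intro add_mono) auto
  also have "\<dots> = ennreal (c * sum_list (map g (v # vs)))"
    by (simp add: c g sum_list_nonneg_map ennreal_plus[symmetric] algebra_simps del: ennreal_plus)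
  finally show ?case .
qed



lemma exp_theta:
  assumes "d \<ge> 1"
  shows "exp (frog_theta d \<eta>) = sqrt ((mean_eta \<eta> + 1) * real d)"
proof -
  have X: "(mean_eta \<eta> + 1) * real d > 0" using assms mean_ge0[of \<eta>] by simp
  have "exp (frog_theta d \<eta>) ^ 2 = (mean_eta \<eta> + 1) * real d"
    unfolding frog_theta_def by (simp add: power2_eq_square exp_add[symmetric] X)
  then show ?thesis by (metis abs_of_nonneg exp_ge_zero real_sqrt_abs)
qed

lemma frog_one:
  fixes \<eta> :: "nat pmf"
  assumes d: "d \<ge> 1" and inv: "finv (fs, S)" and v: "v \<in> S"
  defines "g \<equiv> \<lambda>w::nat list. exp (- frog_theta d \<eta> * real (length w))"
  shows "(\<integral>\<^sup>+w. ennreal (g w + mean_eta \<eta> * (if w \<notin> S then g w else 0)) \<partial>pmf_of_set (tree_nbrs d v))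
          \<le> ennreal (frog_m d \<eta> * g v)"
proof -
  define E where "E = mean_eta \<eta>"
  define a where "a = exp (frog_theta d \<eta>)"
  define h where "h = (\<lambda>w. g w + E * (if w \<notin> S then g w else 0))"
  have E0: "E \<ge> 0" using mean_ge0 E_def by simp
  have a0: "a > 0" by (simp add: a_def)
  have aX: "a * a = (E + 1) * real d" using exp_theta[OF d, of \<eta>] E0
    by (simp add: a_def E_def)
  have m: "frog_m d \<eta> = 2 * a / (real d + 1)"
    using exp_theta[OF d, of \<eta>] by (simp add: frog_m_def a_def)
  have g0: "g w \<ge> 0" for w by (simp add: g_def)
  have h0: "h w \<ge> 0" for w using g0 E0 by (simp add: h_def)
  have gc: "g (i # v) = g v / a" for i
    by (simp add: g_def a_def algebra_simps exp_add exp_diff exp_minus field_simps)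
  have hc: "h (i # v) \<le> (1 + E) * (g v / a)" for i
  proof -
    have "h (i # v) \<le> g (i # v) + E * g (i # v)"
      using E0 g0[of "i # v"] by (simp add: h_def)
    also have "\<dots> = (1 + E) * g (i # v)" by (simp add: algebra_simps)
    finally show ?thesis using gc[of i] by simp
  qed
  define C where "C = (\<lambda>i. i # v) ` {..<d}"
  have injC: "inj_on (\<lambda>i. i # v) {..<d}" by (auto simp: inj_on_def)
  have cardC: "card C = d" using injC by (simp add: C_def card_image)
  have sumC: "sum h C \<le> real d * ((1 + E) * (g v / a))"
  proof -
    have "sum h C = (\<Sum>i<d. h (i # v))" using injC by (simp add: C_def sum.reindex)
    also have "\<dots> \<le> (\<Sum>i<d. (1 + E) * (g v / a))" by (rule sum_mono) (rule hc)
    finally show ?thesis by simp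
  qed
  have gd: "real d * ((1 + E) * (g v / a)) = g v * a"
  proof -
    have "real d * ((1 + E) * (g v / a)) = g v * (a * a) / a"
      using aX a0 by (simp add: algebra_simps)
    also have "\<dots> = g v * a" using a0 by simp
    finally show ?thesis .
  qed
  have key: "sum h (tree_nbrs d v) / real (card (tree_nbrs d v)) \<le> frog_m d \<eta> * g v"
  proof (cases "v = []")
    case True
    then have N: "tree_nbrs d v = C" by (simp add: tree_nbrs_def C_def)
    have "sum h C \<le> g v * a"
      using sumC gd by simp
    have dpos: "real d > 0" using d by simp
    have ga: "g v * a \<ge> 0" using a0 g0[of v] by simp
    have "g v * a * (real d + 1) \<le> g v * a * (2 * real d)"
      using ga d by (intro mult_left_mono) auto
    then have "g v * a / real d \<le> 2 * a / (real d + 1) * g v"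
      using dpos g0[of v] a0 by (simp add: divide_simps) (simp add: algebra_simps)
    moreover have "sum h C / real d \<le> g v * a / real d"
      using \<open>sum h C \<le> g v * a\<close> dpos by (simp add: divide_right_mono)
    ultimately show ?thesis using N cardC m by simp
  next
    case False
    then have N: "tree_nbrs d v = insert (tl v) C" by (simp add: tree_nbrs_def C_def)
    have nin: "tl v \<notin> C"
    proof
      assume "tl v \<in> C"
      then obtain i where "tl v = i # v" by (auto simp: C_def)
      then have "length (tl v) = Suc (length v)" by simp
      then show False by simp
    qed
    have fin: "finite C" by (simp add: C_def)
    have tlS: "tl v \<in> S" using inv v False by (simp add: finv_def)
    have gt: "g (tl v) = g v * a"
    proof -
      have "real (length (tl v)) = real (length v) - 1" using False by (cases v) auto
      then have "- frog_theta d \<eta> * real (length (tl v)) = - frog_theta d \<eta> * real (length v) + frog_theta d \<eta>"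
        by (simp add: algebra_simps)
      then show ?thesis unfolding g_def a_def by (simp only: exp_add[symmetric])
    qed
    have "sum h (tree_nbrs d v) = g v * a + sum h C"
      using N nin fin tlS gt by (simp add: h_def)
    also have "\<dots> \<le> g v * a + real d * ((1 + E) * (g v / a))" using sumC by simp
    also have "\<dots> = g v * (2 * a)" using gd by simp
    finally have "sum h (tree_nbrs d v) \<le> g v * (2 * a)" .
    moreover have "card (tree_nbrs d v) = d + 1" using N nin fin cardC by simp
    ultimately have "sum h (tree_nbrs d v) / real (card (tree_nbrs d v)) \<le> g v * (2 * a) / (real d + 1)"
      by (simp add: divide_right_mono add.commute)
    then show ?thesis using m by (simp add: ac_simps)
  qed
  have fin: "finite (tree_nbrs d v)" by (rule nbrs_fin)
  have ne: "tree_nbrs d v \<noteq> {}" using nbrs_ne[OF d] .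
  have cpos: "card (tree_nbrs d v) > 0" using fin ne by (simp add: card_gt_0_iff)
  have "(\<integral>\<^sup>+w. ennreal (h w) \<partial>pmf_of_set (tree_nbrs d v))
       = ennreal (sum h (tree_nbrs d v)) / ennreal (real (card (tree_nbrs d v)))"
    using fin ne h0 by (simp add: nn_integral_pmf_of_set sum_ennreal ennreal_of_nat_eq_real_of_nat)
  also have "\<dots> = ennreal (sum h (tree_nbrs d v) / real (card (tree_nbrs d v)))"
    using cpos h0 by (simp add: divide_ennreal sum_nonneg)
  also have "\<dots> \<le> ennreal (frog_m d \<eta> * g v)" using key by (rule ennreal_leI)
  finally show ?thesis by (simp add: h_def E_def)
qed



lemma step_bound:
  fixes \<eta> :: "nat pmf"
  assumes d: "d \<ge> 1" and int: "integrable (measure_pmf \<eta>) real" and inv: "finv s"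
  shows "(\<integral>\<^sup>+s'. ennreal (frog_W d \<eta> s') \<partial>frog_step d \<eta> s) \<le> ennreal (frog_m d \<eta> * frog_W d \<eta> s)"
proof -
  obtain fs S where s: "s = (fs, S)" by (cases s)
  define g where "g = (\<lambda>w::nat list. exp (- frog_theta d \<eta> * real (length w)))"
  define E where "E = mean_eta \<eta>"
  define h where "h = (\<lambda>w. g w + E * (if w \<notin> S then g w else 0))"
  define R where "R = (\<lambda>fs'. remdups (filter (\<lambda>w. w \<notin> S) fs'))"
  have g0: "g w \<ge> 0" for w by (simp add: g_def)
  have E0: "E \<ge> 0" using mean_ge0 E_def by simp
  have h0: "h w \<ge> 0" for w using g0 E0 by (simp add: h_def)
  have W: "frog_W d \<eta> t = sum_list (map g (fst t))" for t by (simp add: frog_W_def g_def)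
  have inner: "(\<integral>\<^sup>+ws. ennreal (sum_list (map g (fs' @ ws))) \<partial>frog_wake \<eta> (R fs'))
     \<le> ennreal (sum_list (map h fs'))" for fs'
  proof -
    have "(\<integral>\<^sup>+ws. ennreal (sum_list (map g (fs' @ ws))) \<partial>frog_wake \<eta> (R fs'))
       = (\<integral>\<^sup>+ws. ennreal (sum_list (map g fs')) + ennreal (sum_list (map g ws)) \<partial>frog_wake \<eta> (R fs'))"
      by (simp add: g0 sum_list_nonneg_map ennreal_plus[symmetric] del: ennreal_plus)
    also have "\<dots> = ennreal (sum_list (map g fs')) + ennreal (E * sum_list (map g (R fs')))"
      by (simp add: nn_integral_add measure_pmf.emeasure_space_1 wake_int[OF int] g0 E_def)
    also have "\<dots> = ennreal (sum_list (map g fs') + E * sum_list (map g (R fs')))"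
      by (simp add: g0 sum_list_nonneg_map E0)
    also have "\<dots> \<le> ennreal (sum_list (map h fs'))"
    proof (rule ennreal_leI)
      have "sum_list (map g (R fs')) \<le> sum_list (map g (filter (\<lambda>w. w \<notin> S) fs'))"
        unfolding R_def by (rule remdups_le) (rule g0)
      also have "\<dots> = sum_list (map (\<lambda>w. if w \<notin> S then g w else 0) fs')"
        by (rule sum_list_map_filter')
      finally have "E * sum_list (map g (R fs')) \<le> E * sum_list (map (\<lambda>w. if w \<notin> S then g w else 0) fs')"
        using E0 by (rule mult_left_mono)
      also have "\<dots> = sum_list (map (\<lambda>w. E * (if w \<notin> S then g w else 0)) fs')"
        by (simp add: sum_list_const_mult)
      finally show "sum_list (map g fs') + E * sum_list (map g (R fs')) \<le> sum_list (map h fs')"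
        by (simp add: h_def sum_list_addf)
    qed
    finally show ?thesis .
  qed
  have "(\<integral>\<^sup>+s'. ennreal (frog_W d \<eta> s') \<partial>frog_step d \<eta> s)
      = (\<integral>\<^sup>+fs'. \<integral>\<^sup>+ws. ennreal (sum_list (map g (fs' @ ws))) \<partial>frog_wake \<eta> (R fs') \<partial>frog_moves d fs)"
    by (simp add: frog_step_def s W R_def del: map_append)
  also have "\<dots> \<le> (\<integral>\<^sup>+fs'. ennreal (sum_list (map h fs')) \<partial>frog_moves d fs)"
    by (rule nn_integral_mono) (rule inner)
  also have "\<dots> \<le> ennreal (frog_m d \<eta> * sum_list (map g fs))"
  proof (rule moves_bound[OF d _ h0 g0])
    show "frog_m d \<eta> \<ge> 0" using mean_ge0[of \<eta>] by (simp add: frog_m_def)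
    fix v assume "v \<in> set fs"
    then have "v \<in> S" using inv by (auto simp: finv_def s)
    from frog_one[OF d inv[unfolded s] this, of \<eta>]
    show "(\<integral>\<^sup>+w. ennreal (h w) \<partial>pmf_of_set (tree_nbrs d v)) \<le> ennreal (frog_m d \<eta> * g v)"
      unfolding h_def g_def E_def by simp
  qed
  also have "\<dots> = ennreal (frog_m d \<eta> * frog_W d \<eta> s)" by (simp add: W s)
  finally show ?thesis .
qed



lemma hist_bound:
  fixes \<eta> :: "nat pmf"
  assumes d: "d \<ge> 1" and int: "integrable (measure_pmf \<eta>) real"
  shows "(\<integral>\<^sup>+h. ennreal (frog_W d \<eta> (last h)) \<partial>frog_hist d \<eta> n) \<le> ennreal (frog_m d \<eta> ^ n)"
proof (induction n)
  case 0
  then show ?case by (simp add: frog_init_def frog_W_def)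
next
  case (Suc n)
  have m0: "frog_m d \<eta> \<ge> 0" using mean_ge0[of \<eta>] by (simp add: frog_m_def)
  have "(\<integral>\<^sup>+h. ennreal (frog_W d \<eta> (last h)) \<partial>frog_hist d \<eta> (Suc n))
      = (\<integral>\<^sup>+h. \<integral>\<^sup>+s. ennreal (frog_W d \<eta> s) \<partial>frog_step d \<eta> (last h) \<partial>frog_hist d \<eta> n)"
    by simp
  also have "\<dots> \<le> (\<integral>\<^sup>+h. ennreal (frog_m d \<eta>) * ennreal (frog_W d \<eta> (last h)) \<partial>frog_hist d \<eta> n)"
  proof (rule nn_integral_mono_AE, rule AE_pmfI)
    fix y assume y: "y \<in> set_pmf (frog_hist d \<eta> n)"
    have W0: "frog_W d \<eta> s \<ge> 0" for s unfolding frog_W_def by (rule sum_list_nonneg_map) simp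
    show "(\<integral>\<^sup>+s. ennreal (frog_W d \<eta> s) \<partial>frog_step d \<eta> (last y)) \<le> ennreal (frog_m d \<eta>) * ennreal (frog_W d \<eta> (last y))"
      using step_bound[OF d int] hist_props[OF d y] m0 W0 by (simp add: ennreal_mult)
  qed
  also have "\<dots> = ennreal (frog_m d \<eta>) * (\<integral>\<^sup>+h. ennreal (frog_W d \<eta> (last h)) \<partial>frog_hist d \<eta> n)"
    by (simp add: nn_integral_cmult)
  also have "\<dots> \<le> ennreal (frog_m d \<eta>) * ennreal (frog_m d \<eta> ^ n)"
    using Suc by (intro mult_left_mono) auto
  also have "\<dots> = ennreal (frog_m d \<eta> ^ Suc n)" using m0 by (simp add: ennreal_mult)
  finally show ?case .
qed

theorem mainTheorem4:
  fixes d :: nat and \<eta> :: "nat pmf"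
  assumes "d \<ge> 2" and "integrable (measure_pmf \<eta>) real"
  shows "(\<forall>n. \<forall>h \<in> set_pmf (frog_hist d \<eta> n).
           (\<integral>\<^sup>+ h'. ennreal (frog_W d \<eta> (last h'))
               \<partial>(cond_pmf (frog_hist d \<eta> (Suc n)) {h'. take (Suc n) h' = h}))
           \<le> ennreal (frog_m d \<eta> * frog_W d \<eta> (last h))) \<and>
         (\<forall>n. (\<integral>\<^sup>+ h. ennreal (frog_W d \<eta> (last h) / frog_m d \<eta> ^ n) \<partial>(frog_hist d \<eta> n)) < \<infinity>)"
proof (intro conjI allI ballI)
  have d: "d \<ge> 1" using assms(1) by simp
  have m0: "frog_m d \<eta> \<ge> 0" using mean_ge0[of \<eta>] by (simp add: frog_m_def)
  have W0: "frog_W d \<eta> s \<ge> 0" for s unfolding frog_W_def by (rule sum_list_nonneg_map) simp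
  fix n h
  assume h: "h \<in> set_pmf (frog_hist d \<eta> n)"
  have "cond_pmf (frog_hist d \<eta> (Suc n)) {h'. take (Suc n) h' = h}
        = map_pmf (\<lambda>s. h @ [s]) (frog_step d \<eta> (last h))"
    unfolding frog_hist.simps
    by (rule cond_hist[where K = "\<lambda>h0. frog_step d \<eta> (last h0)"]) (use hist_props[OF d] h in auto)
  then show "(\<integral>\<^sup>+ h'. ennreal (frog_W d \<eta> (last h'))
               \<partial>(cond_pmf (frog_hist d \<eta> (Suc n)) {h'. take (Suc n) h' = h}))
           \<le> ennreal (frog_m d \<eta> * frog_W d \<eta> (last h))"
    using step_bound[OF d assms(2)] hist_props[OF d h] by simp
next
  fix n
  have m0: "frog_m d \<eta> \<ge> 0" using mean_ge0[of \<eta>] by (simp add: frog_m_def)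
  have W0: "frog_W d \<eta> s \<ge> 0" for s unfolding frog_W_def by (rule sum_list_nonneg_map) simp
  have d: "d \<ge> 1" using assms(1) by simp
  have "(\<integral>\<^sup>+ h. ennreal (frog_W d \<eta> (last h) / frog_m d \<eta> ^ n) \<partial>(frog_hist d \<eta> n))
      = (\<integral>\<^sup>+ h. ennreal (1 / frog_m d \<eta> ^ n) * ennreal (frog_W d \<eta> (last h)) \<partial>(frog_hist d \<eta> n))"
    using m0 W0 by (simp add: ennreal_mult[symmetric])
  also have "\<dots> = ennreal (1 / frog_m d \<eta> ^ n) * (\<integral>\<^sup>+ h. ennreal (frog_W d \<eta> (last h)) \<partial>(frog_hist d \<eta> n))"
    by (simp add: nn_integral_cmult)
  also have "\<dots> \<le> ennreal (1 / frog_m d \<eta> ^ n) * ennreal (frog_m d \<eta> ^ n)"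
    using hist_bound[OF d assms(2)] by (intro mult_left_mono) auto
  also have "\<dots> < \<infinity>" by (simp add: ennreal_mult_less_top)
  finally show "(\<integral>\<^sup>+ h. ennreal (frog_W d \<eta> (last h) / frog_m d \<eta> ^ n) \<partial>(frog_hist d \<eta> n)) < \<infinity>" .
qed

end
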